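(* For integers $i\ge0$, $j\ge0$ and real $k$: (a) if $i\ge1$ and $j\ge1$, then $\sum_{r=0}^{j}(-1)^{j-r}b_{i,r,1}=b_{i,j+1,0}$; (b) $\sum_{r=0}^{i-1}(-1)^{i-1-r}b_{i,r,k}=i!+(-1)^{i-1}(k-1)^i$; (c) $\sum_{r=0}^{i}(-1)^{r}b_{i,r,k}=(k-1)^i$; (d) $\sum_{r=0}^{i}(-1)^{i-r}b_{i,r,0}=1$.
   Context: For integers $i\ge0$, $j\ge0$ and real $k$, $b_{i,j,k}=\sum_{r=0}^{j}\binom{j}{r}(-1)^{j-r}(r+k)^i$, with the convention $0^0=1$. *)

theory Defs
  imports Complex_Main
begin

text \<open>b i j k = sum over r from 0 to j of (j choose r) (-1)^(j-r) (r+k)^i, with 0^0 = 1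
  (Isabelle's power satisfies x^0 = 1 for all x).\<close>
definition b :: "nat \<Rightarrow> nat \<Rightarrow> real \<Rightarrow> real" where
  "b i j k = (\<Sum>r = 0..j. real (j choose r) * (-1) ^ (j - r) * (real r + k) ^ i)"

end

theory Submission imports Defs begin

lemma b0: "b i 0 k = k ^ i" by (simp add: b_def)

lemma pascal: "b i (Suc j) k = b i j (k+1) - b i j k"
proof -
  let ?X = "\<Sum>s = 0..j. real (j choose Suc s) * (-1) ^ (j - s) * (real s + 1 + k) ^ i"
  have "b i (Suc j) k = (-1) ^ Suc j * k ^ i + (\<Sum>s = 0..j. real (Suc j choose Suc s) * (-1) ^ (j - s) * (real s + 1 + k) ^ i)"
    unfolding b_def by (subst sum.atLeast0_atMost_Suc_shift) (simp add: ac_simps)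
  also have "\<dots> = (-1) ^ Suc j * k ^ i + b i j (k+1) + ?X"
    unfolding b_def binomial_Suc_Suc of_nat_add distrib_right sum.distrib by (simp add: algebra_simps)
  finally have 1: "b i (Suc j) k = (-1) ^ Suc j * k ^ i + b i j (k+1) + ?X" .
  have "- b i j k = (\<Sum>r = 0..j. real (j choose r) * (-1) ^ (Suc j - r) * (real r + k) ^ i)"
    unfolding b_def sum_negf[symmetric] by (rule sum.cong) (auto simp: Suc_diff_le)
  also have "\<dots> = (\<Sum>r = 0..Suc j. real (j choose r) * (-1) ^ (Suc j - r) * (real r + k) ^ i)"
    by simp
  also have "\<dots> = (-1) ^ Suc j * k ^ i + ?X"
    by (subst sum.atLeast0_atMost_Suc_shift) (simp add: ac_simps)
  finally show ?thesis using 1 by simp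
qed

lemma rec2: "b (Suc i) (Suc j) k = k * b i (Suc j) k + real (Suc j) * b i j (k+1)"
proof -
  have "b (Suc i) (Suc j) k = (\<Sum>r = 0..Suc j. real (Suc j choose r) * (-1) ^ (Suc j - r) * (real r + k) ^ i * k)
      + (\<Sum>r = 0..Suc j. real (Suc j choose r) * real r * (-1) ^ (Suc j - r) * (real r + k) ^ i)"
    unfolding b_def sum.distrib[symmetric] by (rule sum.cong) (auto simp: algebra_simps)
  also have "(\<Sum>r = 0..Suc j. real (Suc j choose r) * real r * (-1) ^ (Suc j - r) * (real r + k) ^ i)
     = (\<Sum>s = 0..j. real (Suc j choose Suc s) * real (Suc s) * (-1) ^ (j - s) * (real s + (k + 1)) ^ i)"
    by (subst sum.atLeast0_atMost_Suc_shift) (simp add: algebra_simps)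
  also have "\<dots> = real (Suc j) * b i j (k+1)"
    unfolding b_def sum_distrib_left
  proof (rule sum.cong)
    fix s assume "s \<in> {0..j}"
    have "real (Suc j choose Suc s) * real (Suc s) = real (Suc j) * real (j choose s)"
      by (metis Suc_times_binomial_eq mult.commute of_nat_mult)
    then show "real (Suc j choose Suc s) * real (Suc s) * (-1) ^ (j - s) * (real s + (k + 1)) ^ i =
          real (Suc j) * (real (j choose s) * (-1) ^ (j - s) * (real s + (k + 1)) ^ i)" by simp
  qed simp
  also have "(\<Sum>r = 0..Suc j. real (Suc j choose r) * (-1) ^ (Suc j - r) * (real r + k) ^ i * k) = k * b i (Suc j) k"
    unfolding b_def sum_distrib_left by (rule sum.cong) (simp_all add: mult_ac)
  finally show ?thesis .
qed

lemma vanish: "(\<forall>j>i. \<forall>k. b i j k = 0) \<and> (\<forall>k. b i i k = fact i)"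
proof (induction i)
  case 0
  have "b 0 (Suc j) k = 0" for j k
    using pascal[of 0 j k] by (simp add: b_def)
  then show ?case by (auto simp: b0 gr0_conv_Suc)
next
  case (Suc i)
  have IH1: "b i j k = 0" if "j > i" for j k using Suc.IH that by blast
  have IH2: "b i i k = fact i" for k using Suc.IH by blast
  have "b (Suc i) j k = 0" if "j > Suc i" for j k
  proof -
    define j' where "j' = j - 1"
    have j': "j = Suc j'" using that unfolding j'_def by arith
    have "j' > i" using that j' by simp
    then have "b i (Suc j') k = 0" "b i j' (k+1) = 0" using IH1 by auto
    then show ?thesis using rec2[of i j' k] j' by simp
  qed
  moreover have "b (Suc i) (Suc i) k = fact (Suc i)" for k
  proof -
    have "b i (Suc i) k = 0" using IH1 by simp
    then have "b (Suc i) (Suc i) k = real (Suc i) * fact i" using rec2[of i i k] IH2[of "k+1"] by simp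
    then show ?thesis by (simp only: fact_Suc of_nat_mult)
  qed
  ultimately show ?case by blast
qed

lemma partc: "b i 0 (k-1) = (\<Sum>r = 0..n. (-1) ^ r * b i r k) + (-1) ^ (n+1) * b i (n+1) (k-1)"
proof (induction n)
  case 0
  then show ?case using pascal[of i 0 "k-1"] by simp
next
  case (Suc n)
  have "b i (Suc n) (k-1) = b i (Suc n) k - b i (Suc (Suc n)) (k-1)"
    using pascal[of i "Suc n" "k-1"] by simp
  then have "(-1)^n * b i (Suc n) (k-1) = (-1)^n * b i (Suc n) k - (-1)^n * b i (Suc (Suc n)) (k-1)"
    by (simp add: right_diff_distrib)
  then show ?case using Suc.IH by simp
qed

lemma C: "(\<Sum>r = 0..i. (-1) ^ r * b i r k) = (k - 1) ^ i"
  using partc[of i k i] vanish[of i] by (simp add: b0)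

lemma A: "i \<ge> 1 \<Longrightarrow> (\<Sum>r = 0..j. (-1) ^ (j - r) * b i r 1) = b i (j + 1) 0"
proof (induction j)
  case 0
  then show ?case using pascal[of i 0 0] by (simp add: b0)
next
  case (Suc j)
  have "(\<Sum>r = 0..Suc j. (-1) ^ (Suc j - r) * b i r 1) = b i (Suc j) 1 - (\<Sum>r = 0..j. (-1) ^ (j - r) * b i r 1)"
    by (simp add: Suc_diff_le sum_negf[symmetric])
  then show ?case using Suc pascal[of i "Suc j" 0] by simp
qed

lemma negpow: "r \<le> m \<Longrightarrow> (-1::real)^(m-r) = (-1)^m * (-1)^r"
proof -
  assume "r \<le> m"
  then have "(-1::real)^m = (-1)^(m-r) * (-1)^r" by (simp flip: power_add)
  then have "(-1::real)^m * (-1)^r = (-1)^(m-r) * ((-1)^r * (-1)^r)" by simp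
  also have "(-1::real)^r * (-1)^r = 1" by (simp flip: power_add)
  finally show ?thesis by simp
qed

lemma B: "(\<Sum>r<i. (-1) powi (int i - 1 - int r) * b i r k)
            = fact i + (-1) powi (int i - 1) * (k - 1) ^ i"
proof (cases i)
  case 0
  then show ?thesis by simp
next
  case (Suc m)
  have 1: "(\<Sum>r<i. (-1) powi (int i - 1 - int r) * b i r k) = (-1)^m * (\<Sum>r<i. (-1)^r * b i r k)"
    unfolding sum_distrib_left
  proof (rule sum.cong)
    fix r assume "r \<in> {..<i}"
    then have "r \<le> m" using Suc by simp
    then have "int i - 1 - int r = int (m - r)" using Suc by simp
    then show "(-1) powi (int i - 1 - int r) * b i r k = (-1)^m * ((-1)^r * b i r k)"
      using negpow[OF \<open>r \<le> m\<close>] by (simp add: power_int_of_nat)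
  qed simp
  have 2: "(\<Sum>r = 0..i. (-1) ^ r * b i r k) = (\<Sum>r<i. (-1)^r * b i r k) + (-1)^i * fact i"
  proof -
    have "(\<Sum>r<i. (-1)^r * b i r k) = (\<Sum>r=0..m. (-1)^r * b i r k)"
      using Suc by (simp only: lessThan_Suc_atMost atLeast0AtMost)
    moreover have "(\<Sum>r = 0..i. (-1) ^ r * b i r k) = (\<Sum>r=0..m. (-1)^r * b i r k) + (-1)^i * b i i k"
      using Suc by (simp only: sum.atLeast0_atMost_Suc)
    ultimately show ?thesis using vanish[of i] by simp
  qed
  have 3: "(-1::real) powi (int i - 1) = (-1)^m" using Suc by (simp add: power_int_of_nat)
  have "(-1::real)^m * (-1)^i = -1" using Suc by (simp flip: power_add)
  then have "(-1::real)^m * ((-1)^i * fact i) = - fact i" by (metis mult.assoc mult_minus1)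
  then have 4: "(-1::real)^m * (\<Sum>r<i. (-1)^r * b i r k) = (-1)^m * (k-1)^i + fact i"
  proof -
    assume h: "(-1::real)^m * ((-1)^i * fact i) = - fact i"
    have "(\<Sum>r<i. (-1)^r * b i r k) = (k-1)^i - (-1)^i * fact i" using 2 C[of i k] by linarith
    then have "(-1::real)^m * (\<Sum>r<i. (-1)^r * b i r k) = (-1)^m * (k-1)^i - (-1)^m * ((-1)^i * fact i)"
      by (simp add: right_diff_distrib)
    then show ?thesis using h by linarith
  qed
  show ?thesis using 1 3 4 by simp
qed

theorem mainTheorem12:
  fixes i j :: nat and k :: real
  shows "(i \<ge> 1 \<and> j \<ge> 1 \<longrightarrow>
            (\<Sum>r = 0..j. (-1) ^ (j - r) * b i r 1) = b i (j + 1) 0)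
       \<and> (\<Sum>r<i. (-1) powi (int i - 1 - int r) * b i r k)
            = fact i + (-1) powi (int i - 1) * (k - 1) ^ i
       \<and> (\<Sum>r = 0..i. (-1) ^ r * b i r k) = (k - 1) ^ i
       \<and> (\<Sum>r = 0..i. (-1) ^ (i - r) * b i r 0) = 1"
proof (intro conjI impI)
  show "(\<Sum>r = 0..j. (-1) ^ (j - r) * b i r 1) = b i (j + 1) 0" if "i \<ge> 1 \<and> j \<ge> 1"
    using A that by blast
  show "(\<Sum>r<i. (-1) powi (int i - 1 - int r) * b i r k)
            = fact i + (-1) powi (int i - 1) * (k - 1) ^ i" by (rule B)
  show "(\<Sum>r = 0..i. (-1) ^ r * b i r k) = (k - 1) ^ i" by (rule C)
  have "(\<Sum>r = 0..i. (-1) ^ (i - r) * b i r 0) = (-1)^i * (\<Sum>r = 0..i. (-1) ^ r * b i r 0)"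
    unfolding sum_distrib_left by (rule sum.cong) (simp_all add: negpow)
  also have "\<dots> = (-1)^i * (-1)^i" using C[of i 0] by simp
  also have "\<dots> = (1::real)" by (simp flip: power_add)
  finally show "(\<Sum>r = 0..i. (-1) ^ (i - r) * b i r 0) = 1" .
qed

end
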